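(* Let $n\ge2$ and let $\Sigma=\mathbb{R}^n\subset\mathbb{R}^{n+1}$ be a hyperplane through the origin, $r=|\vec x|$. Define $$f_1(r)=-1+\sum_{m=1}^\infty\frac{m\,(2m-2)!}{2^{3m-1}(m!)^2\prod_{j=0}^{m-1}(n+2j)}\,r^{2m},$$ which has a unique positive root $r_1$. Then $f_1$ satisfies $Lf_1=0$ on $\Sigma$ and is a positive Jacobi function on $\{r>r_1\}$, but $f_1$ is not an eigenfunction on $\{r>r_1\}$; indeed $\int_{\{r>r_1\}}f_1^2e^{-r^2/4}\,d\mu=\infty$.
   Context: Stability operator on a self-shrinker: $Lf=\Delta f-\tfrac12\langle\vec x,\nabla f\rangle+(|A|^2+\tfrac12)f$ (on a hyperplane $|A|^2=0$). A Jacobi function is a function $u$ with $Lu=0$. An eigenfunction on a region $\Omega$ is a $u\not\equiv0$ in $L^2(\Omega,e^{-|\vec x|^2/4}d\mu)$ with $Lu=-\lambda u$ for some constant $\lambda$. *)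

theory Defs
  imports "HOL-Analysis.Analysis"
begin

text \<open>Sigma = R^n, the hyperplane through the origin (so |A|^2 = 0), modelled by real^'n.
  Partial derivatives are directional derivatives along coordinate axes.\<close>

definition partial :: "'n::finite \<Rightarrow> (real^'n \<Rightarrow> real) \<Rightarrow> real^'n \<Rightarrow> real" where
  "partial i f x = deriv (\<lambda>t. f (x + t *\<^sub>R axis i 1)) 0"

definition laplacian :: "(real^'n::finite \<Rightarrow> real) \<Rightarrow> real^'n \<Rightarrow> real" where
  "laplacian f x = (\<Sum>i\<in>UNIV. deriv (\<lambda>t. partial i f (x + t *\<^sub>R axis i 1)) 0)"

text \<open>Stability operator on the hyperplane: L f = Delta f - 1/2 <x, grad f> + (|A|^2 + 1/2) f, |A|^2 = 0.\<close>
definition stabL :: "(real^'n::finite \<Rightarrow> real) \<Rightarrow> real^'n \<Rightarrow> real" where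
  "stabL f x = laplacian f x - 1/2 * (\<Sum>i\<in>UNIV. x $ i * partial i f x) + 1/2 * f x"

definition twice_partially_differentiable :: "(real^'n::finite \<Rightarrow> real) \<Rightarrow> bool" where
  "twice_partially_differentiable f \<longleftrightarrow>
     (\<forall>x i. (\<lambda>t. f (x + t *\<^sub>R axis i 1)) differentiable (at 0) \<and>
            (\<lambda>t. partial i f (x + t *\<^sub>R axis i 1)) differentiable (at 0))"

definition gauss_L2sq :: "(real^'n::finite) set \<Rightarrow> (real^'n \<Rightarrow> real) \<Rightarrow> ennreal" where
  "gauss_L2sq \<Omega> u = (\<integral>\<^sup>+ x. indicator \<Omega> x * ennreal ((u x)\<^sup>2 * exp (- (norm x)\<^sup>2 / 4)) \<partial>lborel)"

definition jacobi_on :: "(real^'n::finite) set \<Rightarrow> (real^'n \<Rightarrow> real) \<Rightarrow> bool" where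
  "jacobi_on \<Omega> u \<longleftrightarrow> (\<forall>x\<in>\<Omega>. stabL u x = 0)"

definition eigenfunction_on :: "(real^'n::finite) set \<Rightarrow> (real^'n \<Rightarrow> real) \<Rightarrow> bool" where
  "eigenfunction_on \<Omega> u \<longleftrightarrow>
     (\<exists>x\<in>\<Omega>. u x \<noteq> 0) \<and> u \<in> borel_measurable lborel \<and> gauss_L2sq \<Omega> u < \<infinity> \<and>
     (\<exists>lam::real. \<forall>x\<in>\<Omega>. stabL u x = - lam * u x)"

definition f1coeff :: "nat \<Rightarrow> nat \<Rightarrow> real" where
  "f1coeff n m = real m * fact (2*m - 2) /
     (2 ^ (3*m - 1) * (fact m)\<^sup>2 * (\<Prod>j<m. real n + 2 * real j))"

definition f1 :: "nat \<Rightarrow> real \<Rightarrow> real" where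
  "f1 n r = -1 + (\<Sum>k. f1coeff n (Suc k) * r ^ (2 * Suc k))"

end

theory Submission
  imports Defs
begin


lemma f1coeff_pos: "n \<ge> 1 \<Longrightarrow> m \<ge> 1 \<Longrightarrow> f1coeff n m > 0"
  unfolding f1coeff_def
  by (intro divide_pos_pos mult_pos_pos prod_pos) auto

lemma f1coeff_1: "n \<ge> 1 \<Longrightarrow> f1coeff n 1 = 1 / (4 * real n)"
  unfolding f1coeff_def by simp

lemma f1coeff_rec:
  assumes "n \<ge> 1"
  shows "f1coeff n (Suc (Suc m)) * (4*(real m+2)*(2*real m+2+real n)) = (2*real m+1) * f1coeff n (Suc m)"
proof -
  have e1: "2 * Suc (Suc m) - 2 = Suc (Suc (2*m))" by simp
  have e2: "2 * Suc m - 2 = 2*m" by simp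
  have e3: "3 * Suc (Suc m) - 1 = (3*m+2) + 3" by simp
  have e4: "3 * Suc m - 1 = 3*m+2" by simp
  have P: "(\<Prod>j<Suc (Suc m). real n + 2 * real j) = (\<Prod>j<Suc m. real n + 2 * real j) * (real n + 2*real m + 2)"
    by (simp add: algebra_simps)
  have pp: "(\<Prod>j<Suc m. real n + 2 * real j) > 0" using assms by (intro prod_pos) auto
  have fa: "fact (Suc (Suc (2*m))) = (2*real m+2)*(2*real m+1)*(fact (2*m) :: real)"
    by (simp add: algebra_simps)
  have fb: "(fact (Suc (Suc m)) :: real) = (real m + 2) * (real m + 1) * fact m"
    by (simp add: algebra_simps)
  have fc: "(fact (Suc m) :: real) = (real m + 1) * fact m"
    by (simp add: algebra_simps)
  have fm: "(fact m :: real) > 0" by simp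
  have alg: "\<And>P F G Q. P > 0 \<Longrightarrow> F > 0 \<Longrightarrow> Q > 0 \<Longrightarrow>
     (real m + 2) * ((2*real m+2)*(2*real m+1)*G) / (Q * 2^3 * ((real m + 2) * (real m + 1) * F)\<^sup>2 * (P * (real n + 2*real m + 2)))
       * (4*(real m+2)*(2*real m+2+real n))
     = (2*real m+1) * ((real m + 1) * G / (Q * ((real m + 1) * F)\<^sup>2 * P))"
    using assms by (simp add: divide_simps power2_eq_square) (simp add: algebra_simps)
  have ee: "real (Suc (Suc m)) = real m + 2" "real (Suc m) = real m + 1" by auto
  show ?thesis
    unfolding f1coeff_def e1 e2 e3 e4 P fa fb fc power_add ee
    by (rule alg[OF pp fm]) simp
qed

definition acoef :: "nat \<Rightarrow> nat \<Rightarrow> real" where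
  "acoef n m = (if m = 0 then -1 else f1coeff n m)"

lemma acoef_rec:
  assumes "n \<ge> 1"
  shows "acoef n (Suc m) * (4*(real m+1)*(2*real m+real n)) = (2*real m - 1) * acoef n m"
proof (cases m)
  case 0 then show ?thesis using assms f1coeff_1[OF assms] by (simp add: acoef_def)
next
  case (Suc k)
  have "f1coeff n (Suc (Suc k)) * (4*(real k+2)*(2*real k+2+real n)) = (2*real k+1) * f1coeff n (Suc k)"
    by (rule f1coeff_rec[OF assms])
  then show ?thesis using Suc by (simp add: acoef_def algebra_simps)
qed

lemma acoef_pos: "n \<ge> 1 \<Longrightarrow> m \<ge> 1 \<Longrightarrow> acoef n m > 0"
  by (simp add: acoef_def f1coeff_pos)

lemma acoef_bound:
  assumes "n \<ge> 1"
  shows "\<bar>acoef n m\<bar> \<le> 1 / fact m"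
proof (induction m)
  case 0 then show ?case by (simp add: acoef_def)
next
  case (Suc m)
  have D: "4*(real m+1)*(2*real m+real n) > 0" using assms by auto
  have eq: "acoef n (Suc m) = (2*real m - 1) * acoef n m / (4*(real m+1)*(2*real m+real n))"
    using acoef_rec[OF assms, of m] D by (simp add: field_simps)
  have "\<bar>2*real m - 1\<bar> \<le> (2*real m+real n)" using assms by auto
  then have "\<bar>2*real m - 1\<bar> / (4*(real m+1)*(2*real m+real n)) \<le> (2*real m+real n) / (4*(real m+1)*(2*real m+real n))"
    using D by (intro divide_right_mono) auto
  also have "\<dots> = 1 / (4*(real m+1))" using D assms by simp
  also have "\<dots> \<le> 1 / (real m + 1)" by (simp add: divide_simps)
  finally have "\<bar>2*real m - 1\<bar> / (4*(real m+1)*(2*real m+real n)) \<le> 1 / (real m + 1)" .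
  then have X: "\<bar>2*real m - 1\<bar> / (4*(real m+1)*(2*real m+real n)) * \<bar>acoef n m\<bar> \<le> 1 / (real m + 1) * \<bar>acoef n m\<bar>"
    by (rule mult_right_mono) simp
  have "\<bar>acoef n (Suc m)\<bar> = \<bar>2*real m - 1\<bar> / (4*(real m+1)*(2*real m+real n)) * \<bar>acoef n m\<bar>"
    unfolding eq abs_divide abs_mult using D by simp
  then have "\<bar>acoef n (Suc m)\<bar> \<le> \<bar>acoef n m\<bar> / (real m + 1)"
    using X by simp
  also have "\<dots> \<le> (1 / fact m) / (real m + 1)"
    by (rule divide_right_mono[OF Suc.IH]) simp
  also have "\<dots> = 1 / fact (Suc m)" by (simp add: algebra_simps)
  finally show ?case .
qed

lemma acoef_summable:
  assumes "n \<ge> 1"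
  shows "summable (\<lambda>m. acoef n m * s^m)"
proof (rule summable_comparison_test)
  show "\<exists>N. \<forall>m\<ge>N. norm (acoef n m * s^m) \<le> inverse (fact m) * \<bar>s\<bar>^m"
  proof (intro exI allI impI)
    fix m :: nat
    have "norm (acoef n m * s^m) = \<bar>acoef n m\<bar> * \<bar>s\<bar>^m" by (simp add: abs_mult power_abs)
    also have "\<dots> \<le> (1 / fact m) * \<bar>s\<bar>^m"
      by (rule mult_right_mono[OF acoef_bound[OF assms]]) simp
    finally show "norm (acoef n m * s^m) \<le> inverse (fact m) * \<bar>s\<bar>^m" by (simp add: divide_inverse)
  qed
  show "summable (\<lambda>m. inverse (fact m) * \<bar>s\<bar>^m)" by (rule summable_exp)
qed

definition hh :: "nat \<Rightarrow> real \<Rightarrow> real" where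
  "hh n s = (\<Sum>m. acoef n m * s^m)"
definition hh1 :: "nat \<Rightarrow> real \<Rightarrow> real" where
  "hh1 n s = (\<Sum>m. diffs (acoef n) m * s^m)"
definition hh2 :: "nat \<Rightarrow> real \<Rightarrow> real" where
  "hh2 n s = (\<Sum>m. diffs (diffs (acoef n)) m * s^m)"

lemma diffs_summable:
  assumes "n \<ge> 1"
  shows "summable (\<lambda>m. diffs (acoef n) m * s^m)" "summable (\<lambda>m. diffs (diffs (acoef n)) m * s^m)"
  using termdiff_converges_all[OF acoef_summable[OF assms]]
    termdiff_converges_all[OF termdiff_converges_all[OF acoef_summable[OF assms]]] by auto

lemma hh_deriv: "n \<ge> 1 \<Longrightarrow> (hh n has_real_derivative hh1 n s) (at s)"
  unfolding hh_def hh1_def by (rule termdiffs_strong_converges_everywhere[OF acoef_summable])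
lemma hh1_deriv: "n \<ge> 1 \<Longrightarrow> (hh1 n has_real_derivative hh2 n s) (at s)"
  unfolding hh1_def hh2_def by (rule termdiffs_strong_converges_everywhere[OF diffs_summable(1)])


lemma f1_series_eq:
  "(\<lambda>k. f1coeff n (Suc k) * r ^ (2 * Suc k)) = (\<lambda>k. acoef n (Suc k) * (r^2)^(Suc k))"
proof
  fix k
  have "r ^ (2 * Suc k) = (r^2)^(Suc k)" by (rule power_mult)
  then show "f1coeff n (Suc k) * r ^ (2 * Suc k) = acoef n (Suc k) * (r^2)^(Suc k)"
    unfolding acoef_def by simp
qed

lemma f1_hh:
  assumes "n \<ge> 1"
  shows "f1 n r = hh n (r^2)"
proof -
  have "(\<Sum>k. acoef n (Suc k) * (r^2)^(Suc k)) = hh n (r^2) - acoef n 0 * (r^2)^0"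
    unfolding hh_def by (rule suminf_split_head[OF acoef_summable[OF assms]])
  moreover have "acoef n 0 * (r^2)^0 = -1" by (simp add: acoef_def)
  ultimately have "(\<Sum>k. acoef n (Suc k) * (r^2)^(Suc k)) = hh n (r^2) + 1" by simp
  then show ?thesis unfolding f1_def f1_series_eq by linarith
qed

lemma f1_summable:
  assumes "n \<ge> 1"
  shows "summable (\<lambda>k. f1coeff n (Suc k) * r ^ (2 * Suc k))"
  unfolding f1_series_eq
  using summable_Suc_iff[where f="\<lambda>k. acoef n k * (r^2)^k"] acoef_summable[OF assms, of "r^2"] by simp

lemma xdiffs_sums:
  assumes "\<And>y::real. summable (\<lambda>m. c m * y^m)"
  shows "(\<lambda>m. real m * c m * s^m) sums (s * (\<Sum>m. diffs c m * s^m))"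
proof -
  have "(\<lambda>m. diffs c m * s^m) sums (\<Sum>m. diffs c m * s^m)"
    using termdiff_converges_all[OF assms] by (rule summable_sums)
  then have "(\<lambda>m. s * (diffs c m * s^m)) sums (s * (\<Sum>m. diffs c m * s^m))"
    by (rule sums_mult)
  then have "(\<lambda>m. real (Suc m) * c (Suc m) * s^(Suc m)) sums (s * (\<Sum>m. diffs c m * s^m))"
    by (simp add: diffs_def algebra_simps)
  then have "(\<lambda>m. real m * c m * s^m) sums (s * (\<Sum>m. diffs c m * s^m) + real 0 * c 0 * s^0)"
    using sums_Suc_iff[where f="\<lambda>m. real m * c m * s^m"] by simp
  then show ?thesis by simp
qed

lemma hh_ode:
  assumes "n \<ge> 1"
  shows "4 * s * hh2 n s + (2 * real n - s) * hh1 n s + hh n s / 2 = 0"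
proof -
  have S0: "(\<lambda>m. acoef n m * s^m) sums hh n s"
    unfolding hh_def using acoef_summable[OF assms] by (rule summable_sums)
  have S1: "(\<lambda>m. diffs (acoef n) m * s^m) sums hh1 n s"
    unfolding hh1_def using diffs_summable(1)[OF assms] by (rule summable_sums)
  have S2: "(\<lambda>m. real m * diffs (acoef n) m * s^m) sums (s * hh2 n s)"
    unfolding hh2_def by (rule xdiffs_sums[OF diffs_summable(1)[OF assms]])
  have S3: "(\<lambda>m. real m * acoef n m * s^m) sums (s * hh1 n s)"
    unfolding hh1_def by (rule xdiffs_sums[OF acoef_summable[OF assms]])
  have "(\<lambda>m. 4 * (real m * diffs (acoef n) m * s^m) + 2 * real n * (diffs (acoef n) m * s^m)
          - real m * acoef n m * s^m + acoef n m * s^m / 2)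
        sums (4 * (s * hh2 n s) + 2 * real n * hh1 n s - s * hh1 n s + hh n s / 2)"
    by (intro sums_add sums_diff sums_mult sums_divide S0 S1 S2 S3)
  moreover have "(\<lambda>m. 4 * (real m * diffs (acoef n) m * s^m) + 2 * real n * (diffs (acoef n) m * s^m)
          - real m * acoef n m * s^m + acoef n m * s^m / 2) = (\<lambda>m. 0)"
  proof
    fix m
    have "acoef n (Suc m) * (4*(real m+1)*(2*real m+real n)) = (2*real m - 1) * acoef n m"
      by (rule acoef_rec[OF assms])
    then show "4 * (real m * diffs (acoef n) m * s^m) + 2 * real n * (diffs (acoef n) m * s^m)
          - real m * acoef n m * s^m + acoef n m * s^m / 2 = 0"
      (is "?L = 0")
    proof -
      have "?L = s^m/2 * (acoef n (Suc m) * (4*(real m+1)*(2*real m+real n)) - (2*real m - 1) * acoef n m)"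
        unfolding diffs_def by (simp add: algebra_simps)
      then show ?thesis using \<open>acoef n (Suc m) * _ = _\<close> by simp
    qed
  qed
  ultimately have "(4 * (s * hh2 n s) + 2 * real n * hh1 n s - s * hh1 n s + hh n s / 2) = 0"
    using sums_unique2 sums_zero by metis
  then show ?thesis by (simp add: algebra_simps)
qed


lemma hh_mono:
  assumes "n \<ge> 1" "0 \<le> s" "s < t"
  shows "hh n s < hh n t"
proof -
  have "0 < (\<Sum>m. acoef n m * t^m - acoef n m * s^m)"
  proof (rule suminf_pos2[where i=1])
    show "summable (\<lambda>m. acoef n m * t^m - acoef n m * s^m)"
      by (intro summable_diff acoef_summable assms(1))
    fix m
    show "0 \<le> acoef n m * t^m - acoef n m * s^m"
    proof (cases "m = 0")
      case True then show ?thesis by simp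
    next
      case False
      then have "acoef n m > 0" using acoef_pos[OF assms(1)] by simp
      moreover have "s^m \<le> t^m" using assms by (intro power_mono) auto
      ultimately show ?thesis by (simp add: algebra_simps)
    qed
  next
    show "0 < acoef n 1 * t^1 - acoef n 1 * s^1"
      using acoef_pos[OF assms(1), of 1] assms by (simp add: algebra_simps)
  qed
  also have "\<dots> = hh n t - hh n s"
    unfolding hh_def by (rule suminf_diff[symmetric]) (rule acoef_summable[OF assms(1)])+
  finally show ?thesis by simp
qed

lemma hh_0: "hh n 0 = -1"
  unfolding hh_def by (simp add: acoef_def)

lemma hh_big:
  assumes "n \<ge> 1"
  shows "hh n (8 * real n) \<ge> 1"
proof -
  have "(\<Sum>m<2. acoef n m * (8 * real n)^m) \<le> hh n (8 * real n)"
    unfolding hh_def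
  proof (rule sum_le_suminf[OF acoef_summable[OF assms]])
    fix m assume "m \<in> - {..<2::nat}"
    then have "acoef n m > 0" using acoef_pos[OF assms] by auto
    then show "0 \<le> acoef n m * (8 * real n)^m" by simp
  qed simp
  moreover have "f1coeff n (Suc 0) = 1/(4*real n)" using f1coeff_1[OF assms] by simp
  then have "(\<Sum>m<2. acoef n m * (8 * real n)^m) = 1"
    using assms by (simp add: numeral_2_eq_2 acoef_def)
  ultimately show ?thesis by simp
qed

lemma hh_cont: "n \<ge> 1 \<Longrightarrow> isCont (hh n) s"
  using hh_deriv DERIV_isCont by blast

lemma f1_mono:
  assumes "n \<ge> 1" "0 \<le> r" "r < r'"
  shows "f1 n r < f1 n r'"
proof -
  have "r^2 < r'^2" using assms by (intro power_strict_mono) auto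
  then show ?thesis unfolding f1_hh[OF assms(1)] using hh_mono[OF assms(1)] assms by simp
qed

lemma f1_root:
  assumes "n \<ge> 1"
  shows "\<exists>!r1. r1 > 0 \<and> f1 n r1 = 0"
proof -
  obtain s where s: "0 \<le> s" "s \<le> 8 * real n" "hh n s = 0"
    using IVT[of "hh n" 0 0 "8 * real n"] hh_0 hh_big[OF assms] hh_cont[OF assms] by auto
  have "s \<noteq> 0" using s hh_0 by auto
  then have sp: "s > 0" using s by simp
  have ex: "sqrt s > 0 \<and> f1 n (sqrt s) = 0"
    using sp s unfolding f1_hh[OF assms] by simp
  show ?thesis
  proof (rule ex1I[where a="sqrt s"])
    show "sqrt s > 0 \<and> f1 n (sqrt s) = 0" by (rule ex)
  next
    fix r assume r: "r > 0 \<and> f1 n r = 0"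
    show "r = sqrt s"
    proof (rule ccontr)
      assume "r \<noteq> sqrt s"
      then consider "r < sqrt s" | "sqrt s < r" by linarith
      then show False
        using f1_mono[OF assms, of r "sqrt s"] f1_mono[OF assms, of "sqrt s" r] r ex by cases auto
    qed
  qed
qed

lemma f1_pos:
  assumes "n \<ge> 1" "r1 > 0" "f1 n r1 = 0" "r > r1"
  shows "f1 n r > 0"
  using f1_mono[OF assms(1), of r1 r] assms by simp

lemma line_inner:
  fixes y :: "real^'n"
  shows "(y + t *\<^sub>R axis i 1) \<bullet> (y + t *\<^sub>R axis i 1) = y \<bullet> y + 2 * t * y$i + t^2"
  by (simp add: inner_add_left inner_add_right inner_axis inner_axis' inner_commute power2_eq_square algebra_simps)

lemma F_line:
  fixes y :: "real^'n"
  assumes "n \<ge> 1"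
  shows "((\<lambda>t. f1 n (norm (y + t *\<^sub>R axis i 1))) has_real_derivative
           hh1 n (y \<bullet> y + 2 * t * y$i + t^2) * (2 * y$i + 2 * t)) (at t)"
proof -
  have eq: "(\<lambda>t. f1 n (norm (y + t *\<^sub>R axis i 1))) = (\<lambda>t. hh n (y \<bullet> y + 2 * t * y$i + t^2))"
    by (simp add: f1_hh[OF assms] power2_norm_eq_inner line_inner)
  have q: "((\<lambda>t. y \<bullet> y + 2 * t * y$i + t^2) has_real_derivative (2 * y$i + 2 * t)) (at t)"
    by (auto intro!: derivative_eq_intros)
  show ?thesis unfolding eq by (rule DERIV_chain2[OF hh_deriv[OF assms] q])
qed

lemma partial_F:
  fixes y :: "real^'n"
  assumes "n \<ge> 1"
  shows "partial i (\<lambda>x. f1 n (norm x)) y = hh1 n (y \<bullet> y) * (2 * y$i)"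
  unfolding partial_def using DERIV_imp_deriv[OF F_line[OF assms, of y i 0]] by simp

lemma P_line:
  fixes y :: "real^'n"
  assumes "n \<ge> 1"
  shows "((\<lambda>t. partial i (\<lambda>x. f1 n (norm x)) (y + t *\<^sub>R axis i 1)) has_real_derivative
           hh2 n (y \<bullet> y + 2 * t * y$i + t^2) * (2 * y$i + 2 * t) * (2 * (y$i + t)) + hh1 n (y \<bullet> y + 2 * t * y$i + t^2) * 2) (at t)"
proof -
  have eq: "(\<lambda>t. partial i (\<lambda>x. f1 n (norm x)) (y + t *\<^sub>R axis i 1)) = (\<lambda>t. hh1 n (y \<bullet> y + 2 * t * y$i + t^2) * (2 * (y$i + t)))"
    by (simp add: partial_F[OF assms] line_inner)
  have q: "((\<lambda>t. y \<bullet> y + 2 * t * y$i + t^2) has_real_derivative (2 * y$i + 2 * t)) (at t)"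
    by (auto intro!: derivative_eq_intros)
  have c: "((\<lambda>t. hh1 n (y \<bullet> y + 2 * t * y$i + t^2)) has_real_derivative hh2 n (y \<bullet> y + 2 * t * y$i + t^2) * (2 * y$i + 2 * t)) (at t)"
    by (rule DERIV_chain2[OF hh1_deriv[OF assms] q])
  have l: "((\<lambda>t. 2 * (y$i + t)) has_real_derivative 2) (at t)"
    by (auto intro!: derivative_eq_intros)
  show ?thesis unfolding eq using DERIV_mult[OF c l] by (simp add: algebra_simps)
qed

lemma stabL_F:
  fixes y :: "real^'n"
  shows "stabL (\<lambda>x. f1 CARD('n) (norm x)) y = 0"
proof -
  let ?N = "CARD('n)"
  have N: "?N \<ge> 1" by (simp add: Suc_leI)
  let ?s = "y \<bullet> y"
  have L: "laplacian (\<lambda>x. f1 ?N (norm x)) y = (\<Sum>i\<in>UNIV. hh2 ?N ?s * (2 * y$i) * (2 * y$i) + hh1 ?N ?s * 2)"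
    unfolding laplacian_def using DERIV_imp_deriv[OF P_line[OF N, of _ y 0]] by simp
  also have "\<dots> = 4 * hh2 ?N ?s * (\<Sum>i\<in>UNIV. y$i * y$i) + 2 * real ?N * hh1 ?N ?s"
    by (simp add: sum.distrib sum_distrib_left algebra_simps)
  finally have L2: "laplacian (\<lambda>x. f1 ?N (norm x)) y = 4 * ?s * hh2 ?N ?s + 2 * real ?N * hh1 ?N ?s"
    by (simp add: inner_vec_def)
  have G: "(\<Sum>i\<in>UNIV. y $ i * partial i (\<lambda>x. f1 ?N (norm x)) y) = 2 * ?s * hh1 ?N ?s"
    by (simp add: partial_F[OF N] inner_vec_def sum_distrib_left sum_distrib_right algebra_simps)
  have F: "f1 ?N (norm y) = hh ?N ?s" by (simp add: f1_hh[OF N] power2_norm_eq_inner)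
  show ?thesis unfolding stabL_def L2 G F using hh_ode[OF N, of ?s] by (simp add: algebra_simps)
qed

lemma twice_F:
  "twice_partially_differentiable (\<lambda>x::real^'n. f1 CARD('n) (norm x))"
proof -
  have N: "CARD('n) \<ge> 1" by (simp add: Suc_leI)
  show ?thesis unfolding twice_partially_differentiable_def
    using F_line[OF N] P_line[OF N] real_differentiable_def by blast
qed


lemma acoef_growth:
  assumes n: "n \<ge> 1" and m: "m \<ge> n + 1"
  shows "acoef n m * fact m * 8^m \<ge> acoef n (n+1) * fact (n+1) * 8^(n+1)"
  using m
proof (induction m rule: dec_induct)
  case base then show ?case by simp
next
  case (step m)
  have D: "4*(real m+1)*(2*real m+real n) > 0" using n by auto
  have eq: "acoef n (Suc m) = (2*real m - 1) * acoef n m / (4*(real m+1)*(2*real m+real n))"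
    using acoef_rec[OF n, of m] D by (simp add: field_simps)
  have am: "acoef n m > 0" using acoef_pos[OF n] step by auto
  have fm: "(fact (Suc m) :: real) = (real m + 1) * fact m" by simp
  have "acoef n (Suc m) * fact (Suc m) * 8^(Suc m) = (acoef n m * fact m * 8^m) * (2*(2*real m - 1) / (2*real m+real n))"
    unfolding eq fm using D n by (simp add: field_simps)
  also have "\<dots> \<ge> acoef n m * fact m * 8^m"
  proof -
    define X where "X = 2*(2*real m - 1) / (2*real m+real n)"
    define P where "P = acoef n m * fact m * 8^m"
    have h1: "X \<ge> 1" unfolding X_def using step n by (simp add: divide_simps)
    have h2: "P > 0" unfolding P_def using am by simp
    have "P * 1 \<le> P * X" by (rule mult_left_mono[OF h1]) (use h2 in simp)
    then show ?thesis unfolding X_def P_def by simp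
  qed
  finally have "acoef n m * fact m * 8^m \<le> acoef n (Suc m) * fact (Suc m) * 8^(Suc m)" .
  with step.IH show ?case by linarith
qed

lemma exp_sums_real: "(\<lambda>m. u^m / fact m) sums exp (u::real)"
  using exp_converges[of u] by (simp add: divide_inverse mult.commute scaleR_conv_of_real)

lemma sum_exp_bound:
  fixes u :: real
  assumes "u \<ge> 0"
  shows "(\<Sum>m<K. u^m / fact m) \<le> 2^K * exp (u/2)"
proof -
  have "(\<Sum>m<K. u^m / fact m) \<le> (\<Sum>m<K. 2^K * ((u/2)^m / fact m))"
  proof (rule sum_mono)
    fix m assume "m \<in> {..<K}"
    then have "(2::real)^m \<le> 2^K" by (intro power_increasing) simp_all
    then have "2^m * ((u/2)^m / fact m) \<le> 2^K * ((u/2)^m / fact m)"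
      using assms by (intro mult_right_mono) auto
    moreover have "u^m / fact m = 2^m * ((u/2)^m / fact m)" by (simp add: power_divide field_simps)
    ultimately show "u^m / fact m \<le> 2^K * ((u/2)^m / fact m)" by simp
  qed
  also have "\<dots> = 2^K * (\<Sum>m<K. (u/2)^m / fact m)" by (simp add: sum_distrib_left)
  also have "(\<Sum>m<K. (u/2)^m / fact m) \<le> exp (u/2)"
  proof -
    have "(\<Sum>m<K. (u/2)^m / fact m) \<le> (\<Sum>m. (u/2)^m / fact m)"
      by (rule sum_le_suminf[OF sums_summable[OF exp_sums_real]]) (use assms in auto)
    then show ?thesis using sums_unique[OF exp_sums_real[of "u/2"]] by simp
  qed
  then have "2^K * (\<Sum>m<K. (u/2)^m / fact m) \<le> 2^K * exp (u/2)" by simp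
  finally show ?thesis .
qed

lemma hh_lower:
  assumes n: "n \<ge> 1" and s: "s \<ge> 0"
  defines "C \<equiv> acoef n (n+1) * fact (n+1) * 8^(n+1)"
  shows "hh n s \<ge> C * exp (s/8) - C * 2^(n+1) * exp (s/16) - 1"
proof -
  let ?K = "n+1"
  define u where "u = s/8"
  have u: "u \<ge> 0" using s by (simp add: u_def)
  have Cp: "C > 0" unfolding C_def using acoef_pos[OF n, of "n+1"] by simp
  define e where "e m = C * u^m / fact m + (if m = 0 then 1 else 0)" for m
  define c where "c m = C * u^m / fact m - (if m \<in> {..<?K} then e m else 0)" for m
  have ex: "(\<lambda>m. u^m / fact m) sums exp u"
    by (rule exp_sums_real)
  have cs: "c sums (C * exp u - (\<Sum>m<?K. e m))"
    unfolding c_def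
    by (intro sums_diff sums_If_finite_set finite_lessThan) (use sums_mult[OF ex, of C] in simp)
  have esum: "(\<Sum>m<?K. e m) = C * (\<Sum>m<?K. u^m / fact m) + 1"
    unfolding e_def by (simp add: sum.distrib sum_distrib_left algebra_simps)
  have le: "c m \<le> acoef n m * s^m" for m
  proof (cases "m < ?K")
    case True
    show ?thesis
    proof (cases "m = 0")
      case True then show ?thesis by (simp add: c_def e_def acoef_def)
    next
      case False
      then have "acoef n m > 0" using acoef_pos[OF n] by simp
      then have "acoef n m * s^m \<ge> 0" using s by simp
      then show ?thesis using True False by (simp add: c_def e_def)
    qed
  next
    case False
    then have mK: "m \<ge> n+1" by simp
    have g: "acoef n m * fact m * 8^m \<ge> C" unfolding C_def by (rule acoef_growth[OF n mK])
    have sm: "s^m = 8^m * u^m" by (simp add: u_def power_divide)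
    have e1: "acoef n m * s^m = (acoef n m * fact m * 8^m) * u^m / fact m" unfolding sm by simp
    have "(acoef n m * fact m * 8^m) * u^m / fact m \<ge> C * u^m / fact m"
      using g u by (intro divide_right_mono mult_right_mono) auto
    moreover have "c m = C * u^m / fact m" using False by (simp add: c_def)
    ultimately show ?thesis using e1 by linarith
  qed
  have "C * exp u - (\<Sum>m<?K. e m) \<le> hh n s"
    unfolding hh_def using sums_le[OF le cs summable_sums[OF acoef_summable[OF n]]] by simp
  moreover have "(\<Sum>m<?K. u^m / fact m) \<le> 2^?K * exp (u/2)" by (rule sum_exp_bound[OF u])
  ultimately have "hh n s \<ge> C * exp u - C * (2^?K * exp (u/2)) - 1"
    unfolding esum using Cp by (smt (verit) mult_left_mono)
  moreover have "u/2 = s/16" by (simp add: u_def)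
  ultimately show ?thesis by (simp add: u_def algebra_simps)
qed



lemma hh_eventually:
  assumes n: "n \<ge> 1"
  shows "\<exists>R0 \<delta>. \<delta> > 0 \<and> (\<forall>s \<ge> R0. hh n s ^ 2 * exp (- s / 4) \<ge> \<delta>)"
proof -
  define C where "C = acoef n (n+1) * fact (n+1) * 8^(n+1)"
  have Cp: "C > 0" unfolding C_def using acoef_pos[OF n, of "n+1"] by simp
  define M :: real where "M = max (2^(n+3)) (4/C)"
  have M1: "M \<ge> 2^(n+3)" "M \<ge> 4/C" unfolding M_def by auto
  have "(1::real) \<le> 2^(n+3)" by (rule one_le_power) simp
  then have M0: "M \<ge> 1" using M1(1) by linarith
  define R0 where "R0 = max 0 (16 * ln M)"
  show ?thesis
  proof (intro exI conjI allI impI)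
    show "C^2/4 > 0" using Cp by simp
    fix s assume s: "s \<ge> R0"
    then have s0: "s \<ge> 0" and sM: "s/16 \<ge> ln M" unfolding R0_def by auto
    define E where "E = exp (s/16)"
    have "exp (ln M) \<le> exp (s/16)" using sM by (subst exp_le_cancel_iff)
    moreover have "exp (ln M) = M" using M0 by (intro exp_ln) linarith
    ultimately have EM: "E \<ge> M" unfolding E_def by simp
    have E1: "E \<ge> 1" using EM M0 by simp
    have E2: "exp (s/8) = E^2" unfolding E_def power2_eq_square exp_add[symmetric] by simp
    have E4: "exp (s/4) = E^4"
    proof -
      have "exp (s/4) = exp (s/8) * exp (s/8)" by (simp add: exp_add[symmetric])
      then show ?thesis unfolding E2 by simp
    qed
    have low: "hh n s \<ge> C * E^2 - C * 2^(n+1) * E - 1"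
      using hh_lower[OF n s0] unfolding C_def[symmetric] E2 E_def by simp
    have a: "C * 2^(n+1) * E \<le> C * E^2 / 4"
    proof -
      have "C * E * 2^(n+3) \<le> C * E * E" using EM M1 Cp E1 by (intro mult_left_mono) auto
      then show ?thesis by (simp add: power2_eq_square power_add algebra_simps)
    qed
    have b: "1 \<le> C * E^2 / 4"
    proof -
      have "C * E / 4 \<ge> C * (4/C) / 4" using EM M1 Cp by (intro divide_right_mono mult_left_mono) auto
      then have "C * E / 4 \<ge> 1" using Cp by simp
      then have "(C * E / 4) * E \<ge> 1 * 1" using E1 by (intro mult_mono) auto
      then show ?thesis by (simp add: power2_eq_square algebra_simps)
    qed
    have hpos: "hh n s \<ge> C * E^2 / 2" using low a b by linarith
    have "(C * E^2 / 2)^2 \<le> hh n s ^ 2"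
      using hpos Cp by (intro power_mono) auto
    moreover have "(C * E^2 / 2)^2 = C^2 * E^4 / 4"
    proof -
      have "E^4 = E^2 * E^2" by (simp add: power_add[symmetric])
      then show ?thesis by (simp add: power2_eq_square)
    qed
    ultimately have "C^2 * E^4 / 4 \<le> hh n s ^ 2" by simp
    moreover have E4p: "E^4 > 0" using E1 by simp
    ultimately have "C^2 / 4 \<le> hh n s ^ 2 / E^4"
      by (subst pos_le_divide_eq[OF E4p]) simp
    also have "hh n s ^ 2 / E^4 = hh n s ^ 2 * exp (- s / 4)"
    proof -
      have m: "- s / 4 = - (s/4)" by (rule minus_divide_left[symmetric])
      have "exp (- (s/4)) = inverse (exp (s/4))" by (rule exp_minus)
      then have ee: "inverse (E^4) = exp (- s / 4)" unfolding m E4 by (rule sym)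
      have "hh n s ^ 2 / E^4 = hh n s ^ 2 * inverse (E^4)" by (rule divide_inverse)
      then show ?thesis unfolding ee .
    qed
    finally show "C^2/4 \<le> hh n s ^ 2 * exp (- s / 4)" .
  qed
qed

lemma measure_outside_ball:
  "emeasure lborel {x::real^'n. R < norm x} = \<infinity>"
proof -
  have eq: "{x::real^'n. R < norm x} = UNIV - cball 0 R" by (auto simp: dist_norm)
  have "emeasure lborel (UNIV - cball (0::real^'n) R) = emeasure lborel (UNIV::(real^'n) set) - emeasure lborel (cball (0::real^'n) R)"
    using emeasure_lborel_cball_finite[of "0::real^'n" R] by (intro emeasure_Diff) auto
  then show ?thesis unfolding eq by simp
qed

lemma gauss_infinite:
  assumes r1: "r1 > 0"
  shows "gauss_L2sq {x::real^'n. norm x > r1} (\<lambda>x. f1 CARD('n) (norm x)) = \<infinity>"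
proof -
  let ?N = "CARD('n)"
  have N: "?N \<ge> 1" by (simp add: Suc_leI)
  obtain R0 \<delta> where d: "\<delta> > 0" and R0: "\<And>s. s \<ge> R0 \<Longrightarrow> hh ?N s ^ 2 * exp (- s / 4) \<ge> \<delta>"
    using hh_eventually[OF N] by blast
  define R where "R = max r1 (max 1 R0)"
  have le: "ennreal \<delta> * indicator {x::real^'n. R < norm x} x
      \<le> indicator {x. norm x > r1} x * ennreal ((f1 ?N (norm x))\<^sup>2 * exp (- (norm x)\<^sup>2 / 4))" for x
  proof (cases "R < norm x")
    case True
    then have x1: "norm x > r1" "norm x \<ge> 1" "norm x \<ge> R0" unfolding R_def by auto
    have "norm x * 1 \<le> norm x * norm x" by (rule mult_left_mono) (use x1 in auto)
    then have "norm x ^ 2 \<ge> norm x" by (simp add: power2_eq_square)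
    then have "norm x ^ 2 \<ge> R0" using x1 by linarith
    then have "hh ?N (norm x ^ 2) ^ 2 * exp (- (norm x ^ 2) / 4) \<ge> \<delta>" by (rule R0)
    then have "\<delta> \<le> (f1 ?N (norm x))\<^sup>2 * exp (- (norm x)\<^sup>2 / 4)" by (simp add: f1_hh[OF N])
    then show ?thesis using True x1 by (simp add: ennreal_leI)
  qed simp
  have meas: "{x::real^'n. R < norm x} \<in> sets lborel"
  proof -
    have "open {x::real^'n. R < norm x}"
      by (rule open_Collect_less) (auto intro: continuous_intros)
    then show ?thesis unfolding sets_lborel by (rule borel_open)
  qed
  have "\<infinity> = (\<integral>\<^sup>+ x. ennreal \<delta> * indicator {x::real^'n. R < norm x} x \<partial>lborel)"
    using d by (simp add: nn_integral_cmult_indicator[OF meas] measure_outside_ball ennreal_mult_top)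
  also have "\<dots> \<le> gauss_L2sq {x::real^'n. norm x > r1} (\<lambda>x. f1 CARD('n) (norm x))"
    unfolding gauss_L2sq_def by (intro nn_integral_mono le)
  finally show ?thesis by (simp add: top_unique)
qed


theorem lemma4p14:
  fixes F :: "real^'n \<Rightarrow> real"
  assumes n2: "CARD('n) \<ge> 2"
    and F_def: "F = (\<lambda>x. f1 CARD('n) (norm x))"
  shows "(\<forall>r. summable (\<lambda>k. f1coeff CARD('n) (Suc k) * r ^ (2 * Suc k)))
       \<and> (\<exists>!r1. r1 > 0 \<and> f1 CARD('n) r1 = 0)
       \<and> twice_partially_differentiable F
       \<and> (\<forall>x. stabL F x = 0)
       \<and> (\<forall>r1. r1 > 0 \<and> f1 CARD('n) r1 = 0 \<longrightarrow>
             jacobi_on {x. norm x > r1} F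
           \<and> (\<forall>x. norm x > r1 \<longrightarrow> F x > 0)
           \<and> \<not> eigenfunction_on {x. norm x > r1} F
           \<and> gauss_L2sq {x. norm x > r1} F = \<infinity>)"
proof -
  have N: "CARD('n) \<ge> 1" using n2 by simp
  have S: "\<forall>x. stabL F x = 0" unfolding F_def using stabL_F by blast
  have R: "jacobi_on {x. norm x > r1} F
           \<and> (\<forall>x. norm x > r1 \<longrightarrow> F x > 0)
           \<and> \<not> eigenfunction_on {x. norm x > r1} F
           \<and> gauss_L2sq {x. norm x > r1} F = \<infinity>" if r1: "r1 > 0" "f1 CARD('n) r1 = 0" for r1
  proof -
    have J: "jacobi_on {x. norm x > r1} F" unfolding jacobi_on_def using S by blast
    have P: "\<forall>x. norm x > r1 \<longrightarrow> F x > 0" unfolding F_def using f1_pos[OF N r1] by simp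
    have G: "gauss_L2sq {x. norm x > r1} F = \<infinity>" unfolding F_def by (rule gauss_infinite[OF r1(1)])
    have E: "\<not> eigenfunction_on {x. norm x > r1} F" unfolding eigenfunction_on_def using G by simp
    show ?thesis using J P G E by blast
  qed
  show ?thesis
  proof (intro conjI allI impI)
    fix r show "summable (\<lambda>k. f1coeff CARD('n) (Suc k) * r ^ (2 * Suc k))" by (rule f1_summable[OF N])
  next
    show "\<exists>!r1. r1 > 0 \<and> f1 CARD('n) r1 = 0" by (rule f1_root[OF N])
  next
    show "twice_partially_differentiable F" unfolding F_def by (rule twice_F)
  next
    fix x show "stabL F x = 0" using S by blast
  qed (use R in blast)+
qed

end
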